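(* Let $\epsilon\in\{1,-1\}\subseteq\mathbb{F}_{p^m}$, $\phi(x)=x^2+\epsilon\gamma x+\frac{\gamma^2}{2}$, $\mathsf{R}_{\epsilon\gamma}=R[x]/\langle\phi(x)^{p^s}\rangle$, and let $\mathcal{I}$ be an ideal of $\mathsf{R}_{\epsilon\gamma}$ (notation and parameter ranges as in the classification into Types I–IV below). Then: (a) if $\mathcal{I}=\{0\}$, $|\mathcal{I}|=1$; (b) if $\mathcal{I}=\mathsf{R}_{\epsilon\gamma}$, $|\mathcal{I}|=p^{4mp^s}$; (c) if $\mathcal{I}=\langle u\phi(x)^i\rangle$ with $0\le i\le p^s-1$, $|\mathcal{I}|=p^{2m(p^s-i)}$; (d) if $\mathcal{I}=\langle\phi(x)^i+u\phi(x)^th(x)\rangle$ is of Type III, then $|\mathcal{I}|=p^{4m(p^s-i)}$ if either $h(x)=0$, or $h(x)$ is a unit and $1\le i\le\frac{p^s+t}{2}$; and $|\mathcal{I}|=p^{2m(p^s-t)}$ if $h(x)$ is a unit and $\frac{p^s+t}{2}<i\le p^s-1$; (e) if $\mathcal{I}=\langle\phi(x)^i+u\phi(x)^th(x),\ u\phi(x)^w\rangle$ is of Type IV, $|\mathcal{I}|=p^{2m(2p^s-i-w)}$.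
   Context: Let $p$ be an odd prime and $m,s$ positive integers with $p^m\equiv 3\pmod 4$; $\mathbb{F}_{p^m}$ is the field with $p^m$ elements and $R=\mathbb{F}_{p^m}[u]/\langle u^2\rangle$. Fix $\alpha\in\mathbb{F}_{p^m}\setminus\{0\}$ non-square, $\alpha_0^{p^s}=\alpha$, $\gamma\in\mathbb{F}_{p^m}$ with $\gamma^4+4\alpha_0=0$. Ideal types of $\mathsf{R}_{\epsilon\gamma}$: Type III ideals are $\langle\phi^i+u\phi^th\rangle$ with $1\le i\le p^s-1$, $0\le t<i$, and $h=0$ or $h$ a unit of the form $\sum_{j=0}^{i-t-1}(a_{j0}x+b_{j0})\phi^j$ ($a_{j0},b_{j0}\in\mathbb{F}_{p^m}$, $a_{00}x+b_{00}\ne0$). Type IV ideals are $\langle\phi^i+u\phi^th,\ u\phi^w\rangle$ with $1\le i\le p^s-1$, $0\le t<w$, $h=0$ or $h$ a unit of the form $\sum_{j=0}^{w-t-1}(a_{j0}x+b_{j0})\phi^j$ with $a_{00}x+b_{00}\neq 0$, and $w<U$ where $U$ is the least integer with $u\phi^U\in\langle\phi^i+u\phi^th\rangle$. *)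

theory Defs
  imports "HOL-Computational_Algebra.Polynomial" "HOL-Library.Cardinality"
begin

text \<open>Elements of R[x], R = F[u]/(u^2), are written as pairs (a, b) of polynomials
  over F, standing for a(x) + u b(x).\<close>

definition rmul :: "'a::comm_ring_1 poly \<times> 'a poly \<Rightarrow> 'a poly \<times> 'a poly \<Rightarrow> 'a poly \<times> 'a poly" where
  "rmul x y = (fst x * fst y, fst x * snd y + snd x * fst y)"

definition rred :: "'a::field poly \<Rightarrow> 'a poly \<times> 'a poly \<Rightarrow> 'a poly \<times> 'a poly" where
  "rred N x = (fst x mod N, snd x mod N)"

text \<open>The ideal of R[x]/(N) generated by (the residues of) the list gs, as a set of
  canonical representatives.\<close>
definition gen_ideal :: "'a::field poly \<Rightarrow> ('a poly \<times> 'a poly) list \<Rightarrow> ('a poly \<times> 'a poly) set" where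
  "gen_ideal N gs = {rred N ((\<Sum>j<length gs. fst (rmul (r j) (gs ! j))),
                             (\<Sum>j<length gs. snd (rmul (r j) (gs ! j)))) | r. True}"

end

theory Submission
  imports Defs "HOL-Computational_Algebra.Polynomial_Factorial"
begin


lemma two_ne0:
  assumes "\<not> (\<exists>y::'a::{finite,field}. y ^ 2 = \<alpha>)"
  shows "(2::'a) \<noteq> 0"
proof
  assume h2: "(2::'a) = 0"
  have "inj (\<lambda>x::'a. x ^ 2)"
  proof (rule injI)
    fix x y :: 'a assume "x ^ 2 = y ^ 2"
    have "(x - y) ^ 2 = x^2 + y^2 - 2 * x * y" by (simp add: power2_eq_square algebra_simps)
    also have "\<dots> = 2 * x^2" using \<open>x^2 = y^2\<close> h2 by simp
    also have "\<dots> = 0" using h2 by simp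
    finally show "x = y" by simp
  qed
  then have "surj (\<lambda>x::'a. x ^ 2)" by (simp add: finite_UNIV_inj_surj)
  then obtain y where "\<alpha> = y ^ 2" by blast
  with assms show False by auto
qed

lemma phi_noroot:
  fixes \<alpha> \<alpha>0 \<gamma> \<epsilon> x :: "'a::{finite,field}"
  assumes "\<alpha> \<noteq> 0" and ns: "\<not> (\<exists>y. y ^ 2 = \<alpha>)"
    and a0: "\<alpha>0 ^ P = \<alpha>" and g: "\<gamma> ^ 4 + 4 * \<alpha>0 = 0"
    and e: "\<epsilon> = 1 \<or> \<epsilon> = -1"
  shows "poly [:\<gamma> ^ 2 / 2, \<epsilon> * \<gamma>, 1:] x \<noteq> 0"
proof
  assume r: "poly [:\<gamma> ^ 2 / 2, \<epsilon> * \<gamma>, 1:] x = 0"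
  have t: "(2::'a) \<noteq> 0" using two_ne0 ns by blast
  have e2: "\<epsilon> * \<epsilon> = 1" using e by auto
  have a0v: "\<alpha>0 = - (\<gamma>^4 / 4)"
  proof -
    have "(4::'a) = 2 * 2" by simp
    then have "(4::'a) \<noteq> 0" using t by (metis mult_eq_0_iff)
    then show ?thesis using g by (simp add: field_simps) (metis add.commute add_eq_0_iff mult.commute)
  qed
  have g0: "\<gamma> \<noteq> 0"
  proof
    assume "\<gamma> = 0"
    then have "\<alpha>0 = 0" using a0v by simp
    then have "\<alpha> = 0 ^ P" using a0 by simp
    moreover have "P \<noteq> 0" using \<open>\<alpha> \<noteq> 0\<close> a0 ns by (metis power_0 power_one)
    ultimately show False using \<open>\<alpha> \<noteq> 0\<close> by simp
  qed
  define y where "y = (2 * x + \<epsilon> * \<gamma>) / \<gamma>"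
  have r': "x * x + \<epsilon> * \<gamma> * x + \<gamma>^2/2 = 0" using r by (simp add: algebra_simps)
  have num: "(2 * x + \<epsilon> * \<gamma>)^2 = 4 * (x * x + \<epsilon> * \<gamma> * x + \<gamma>^2/2) - 2*\<gamma>^2 + \<epsilon>*\<epsilon>*\<gamma>^2"
    using t by (simp add: field_simps power2_eq_square)
  have "y ^ 2 = (2 * x + \<epsilon> * \<gamma>)^2 / \<gamma>^2"
    unfolding y_def by (simp add: power_divide)
  also have "\<dots> = -1" using r' e2 g0 num by simp
  finally have y2: "y^2 = -1" .
  have "((y * \<gamma>^2 / 2) ^ P) ^ 2 = ((y^2) * \<gamma>^4 / 4) ^ P"
  proof -
    have "((y * \<gamma>^2 / 2) ^ P) ^ 2 = ((y * \<gamma>^2 / 2) ^ 2) ^ P" by (simp flip: power_mult add: mult.commute)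
    also have "(y * \<gamma>^2 / 2) ^ 2 = (y^2) * \<gamma>^4 / 4" by (simp add: power2_eq_square field_simps numeral_eq_Suc)
    finally show ?thesis .
  qed
  also have "\<dots> = \<alpha>" using y2 a0v a0 by simp
  finally show False using ns by blast
qed



lemma irred_deg2:
  fixes \<phi> :: "'a::field poly"
  assumes d: "degree \<phi> = 2" and nr: "\<And>x. poly \<phi> x \<noteq> 0"
  shows "irreducible \<phi>"
proof (rule irreducibleI)
  show nz: "\<phi> \<noteq> 0" using d by auto
  show "\<not> \<phi> dvd 1" using is_unit_iff_degree[OF nz] d by simp
  fix a b assume ab: "\<phi> = a * b"
  then have a0: "a \<noteq> 0" and b0: "b \<noteq> 0" using nz by auto
  have dd: "degree a + degree b = 2" using ab d degree_mult_eq[OF a0 b0] by simp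
  show "a dvd 1 \<or> b dvd 1"
  proof (cases "degree a = 1")
    case True
    obtain c e where ce: "a = [:c, e:]" "e \<noteq> 0" using degree1_coeffs[OF True] by blast
    have "poly a (- c / e) = 0" using ce by simp
    then have "poly \<phi> (- c / e) = 0" using ab by simp
    with nr show ?thesis by blast
  next
    case False
    then have "degree a = 0 \<or> degree b = 0" using dd by auto
    then show ?thesis using is_unit_iff_degree a0 b0 by blast
  qed
qed

lemma h_nd:
  fixes \<phi> :: "'a::field poly"
  assumes d: "degree \<phi> = 2" and ab: "a 0 \<noteq> 0 \<or> b 0 \<noteq> 0" and k: "0 < k"
  shows "\<not> \<phi> dvd (\<Sum>j<k. [:b j, a j:] * \<phi> ^ j)"
proof
  assume dv: "\<phi> dvd (\<Sum>j<k. [:b j, a j:] * \<phi> ^ j)"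
  obtain k' where kk: "k = Suc k'" using k by (cases k) auto
  have hs: "(\<Sum>j<k. [:b j, a j:] * \<phi> ^ j) = [:b 0, a 0:] + (\<Sum>j<k'. [:b (Suc j), a (Suc j):] * \<phi> ^ Suc j)"
    unfolding kk sum.lessThan_Suc_shift by simp
  have hr: "\<phi> dvd (\<Sum>j<k'. [:b (Suc j), a (Suc j):] * \<phi> ^ Suc j)"
    by (intro dvd_sum dvd_mult) (simp add: power_Suc)
  have "[:b 0, a 0:] = (\<Sum>j<k. [:b j, a j:] * \<phi> ^ j) - (\<Sum>j<k'. [:b (Suc j), a (Suc j):] * \<phi> ^ Suc j)"
    using hs by simp
  then have "\<phi> dvd [:b 0, a 0:]" using dvd_diff[OF dv hr] by simp
  moreover have "[:b 0, a 0:] \<noteq> 0" using ab by auto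
  ultimately have "degree \<phi> \<le> degree [:b 0, a 0:]" using dvd_imp_degree_le by blast
  moreover have "degree [:b 0, a 0:] \<le> 1" using degree_pCons_le[of "b 0" "[:a 0:]"] by simp
  ultimately show False using d by simp
qed



definition Pd :: "nat \<Rightarrow> 'a::field poly set" where "Pd d = {c. c = 0 \<or> degree c < d}"
definition Sk :: "'a::field poly \<Rightarrow> nat \<Rightarrow> nat \<Rightarrow> 'a poly set" where
  "Sk \<phi> n k = (\<lambda>c. \<phi>^k * c) ` Pd (degree \<phi> * (n - k))"
definition Tset :: "'a::field poly \<Rightarrow> nat \<Rightarrow> nat \<Rightarrow> nat \<Rightarrow> 'a poly \<Rightarrow> ('a poly \<times> 'a poly) set" where
  "Tset \<phi> n i k f = (\<lambda>(c,y). (\<phi>^i*c, (c*f+y) mod \<phi>^n)) ` (Pd (degree \<phi>*(n-i)) \<times> Sk \<phi> n k)"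
definition Iset :: "'a::field poly \<Rightarrow> nat \<Rightarrow> nat \<Rightarrow> 'a poly \<Rightarrow> 'a poly set \<Rightarrow> ('a poly \<times> 'a poly) set" where
  "Iset \<phi> n i f Z = {((x0*\<phi>^i) mod \<phi>^n, (x0*f + z) mod \<phi>^n) | x0 z. z \<in> Z}"

lemma card_Pd: "card (Pd d :: 'a::{finite,field} poly set) = CARD('a) ^ d"
proof -
  let ?L = "{xs::'a list. set xs \<subseteq> UNIV \<and> length xs = d}"
  have inj: "inj_on Poly ?L"
  proof (rule inj_onI)
    fix xs ys :: "'a list" assume "xs \<in> ?L" "ys \<in> ?L" "Poly xs = Poly ys"
    then have l: "length xs = d" "length ys = d" and c: "\<And>j. coeff (Poly xs) j = coeff (Poly ys) j" by auto
    show "xs = ys"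
    proof (rule nth_equalityI)
      show "length xs = length ys" using l by simp
      fix j assume "j < length xs"
      then show "xs ! j = ys ! j" using c[of j] l by (simp add: nth_default_nth)
    qed
  qed
  have img: "Poly ` ?L = Pd d"
  proof
    show "Poly ` ?L \<subseteq> Pd d"
    proof
      fix c assume "c \<in> Poly ` ?L"
      then obtain xs where xs: "length xs = d" "c = Poly xs" by auto
      show "c \<in> Pd d"
      proof (cases "c = 0")
        case False
        have "\<forall>j>d - 1. coeff c j = 0" using xs by (auto simp: nth_default_def)
        then have "degree c \<le> d - 1" by (rule degree_le)
        moreover have "d \<noteq> 0" using xs False by auto
        ultimately show ?thesis unfolding Pd_def by auto
      qed (simp add: Pd_def)
    qed
    show "Pd d \<subseteq> Poly ` ?L"
    proof
      fix c :: "'a poly" assume "c \<in> Pd d"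
      then have cz: "\<And>j. j \<ge> d \<Longrightarrow> coeff c j = 0" unfolding Pd_def
        by (auto intro: coeff_eq_0)
      have "c = Poly (map (coeff c) [0..<d])"
        by (rule poly_eqI) (auto simp: nth_default_def cz)
      then show "c \<in> Poly ` ?L" by (intro image_eqI[where x="map (coeff c) [0..<d]"]) auto
    qed
  qed
  have "card (Pd d :: 'a poly set) = card ?L" using card_image[OF inj] img by simp
  also have "\<dots> = CARD('a) ^ d" using card_lists_length_eq[of "UNIV::'a set" d] by simp
  finally show ?thesis .
qed

lemma finite_Pd: "finite (Pd d :: 'a::{finite,field} poly set)"
  using card_Pd[of d] by (metis card.infinite finite_UNIV_card_ge_0 not_gr0 power_not_zero finite)

lemma card_Sk:
  fixes \<phi> :: "'a::{finite,field} poly"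
  assumes "\<phi> \<noteq> 0"
  shows "card (Sk \<phi> n k) = CARD('a) ^ (degree \<phi> * (n - k))"
proof -
  have "inj_on (\<lambda>c. \<phi>^k * c) (Pd (degree \<phi> * (n - k)))"
    using assms by (auto intro: inj_onI)
  then show ?thesis unfolding Sk_def by (simp add: card_image card_Pd)
qed

lemma Sk_mod:
  fixes \<phi> x :: "'a::field poly"
  assumes "\<phi> \<noteq> 0" "k \<le> n" "\<phi>^k dvd x"
  shows "x mod \<phi>^n \<in> Sk \<phi> n k"
proof -
  obtain z where z: "x = \<phi>^k * z" using assms(3) by (auto elim: dvdE)
  have pn: "\<phi>^n = \<phi>^k * \<phi>^(n-k)" using assms(2) by (simp flip: power_add)
  have "x mod \<phi>^n = \<phi>^k * (z mod \<phi>^(n-k))" unfolding z pn by (rule mod_mult_mult1)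
  moreover have "z mod \<phi>^(n-k) \<in> Pd (degree \<phi> * (n - k))"
    using degree_mod_less[of "\<phi>^(n-k)" z] assms(1) by (auto simp: Pd_def degree_power_eq mult.commute)
  ultimately show ?thesis unfolding Sk_def by blast
qed

lemma Sk_D:
  fixes \<phi> y :: "'a::field poly"
  assumes "\<phi> \<noteq> 0" "k \<le> n" "y \<in> Sk \<phi> n k"
  shows "y mod \<phi>^n = y \<and> \<phi>^k dvd y"
proof -
  obtain c where c: "y = \<phi>^k * c" "c \<in> Pd (degree \<phi> * (n - k))" using assms(3) unfolding Sk_def by auto
  have "y mod \<phi>^n = y"
  proof (cases "c = 0")
    case False
    then have "degree c < degree \<phi> * (n - k)" using c(2) by (auto simp: Pd_def)
    have dy: "degree y = degree \<phi> * k + degree c" using c(1) assms False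
      by (simp add: degree_mult_eq degree_power_eq)
    have "degree \<phi> * k + degree \<phi> * (n - k) = degree \<phi> * n"
      using assms(2) by (simp flip: distrib_left)
    moreover have "degree (\<phi>^n) = degree \<phi> * n" using assms(1) by (simp add: degree_power_eq mult.commute)
    ultimately have "degree y < degree (\<phi>^n)" using dy \<open>degree c < _\<close> by linarith
    then show ?thesis by (rule mod_poly_less)
  qed (simp add: c)
  then show ?thesis using c by simp
qed

lemma card_T:
  fixes \<phi> f :: "'a::{finite,field} poly"
  assumes nz: "\<phi> \<noteq> 0" and "k \<le> n"
  shows "card (Tset \<phi> n i k f) = CARD('a) ^ (degree \<phi> * (n - i)) * CARD('a) ^ (degree \<phi> * (n - k))"
proof -
  have "inj_on (\<lambda>(c,y). (\<phi>^i*c, (c*f+y) mod \<phi>^n)) (Pd (degree \<phi>*(n-i)) \<times> Sk \<phi> n k)"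
  proof (rule inj_onI, clarify)
    fix c y c' y' assume "y \<in> Sk \<phi> n k" "y' \<in> Sk \<phi> n k" and e: "\<phi>^i*c = \<phi>^i*c'"
      "(c*f+y) mod \<phi>^n = (c'*f+y') mod \<phi>^n"
    have cc: "c = c'" using e(1) nz by simp
    then have "\<phi>^n dvd (c*f+y) - (c*f+y')" using e(2) by (simp add: mod_eq_dvd_iff)
    then have "y mod \<phi>^n = y' mod \<phi>^n" by (simp add: mod_eq_dvd_iff)
    then show "c = c' \<and> y = y'" using cc Sk_D[OF nz assms(2)] \<open>y \<in> _\<close> \<open>y' \<in> _\<close> by metis
  qed
  then show ?thesis unfolding Tset_def
    by (simp add: card_image card_cartesian_product card_Pd card_Sk[OF nz])
qed

lemma I_eq_T:
  fixes \<phi> f :: "'a::field poly"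
  assumes nz: "\<phi> \<noteq> 0" and i: "i \<le> n" and k: "k \<le> n"
    and kf: "\<phi>^k dvd \<phi>^(n-i) * f"
    and Z1: "\<And>z. z \<in> Z \<Longrightarrow> \<phi>^k dvd z"
    and Z2: "\<And>y. y \<in> Sk \<phi> n k \<Longrightarrow> \<exists>d z. z \<in> Z \<and> \<phi>^n dvd (\<phi>^(n-i)*d*f + z - y)"
  shows "Iset \<phi> n i f Z = Tset \<phi> n i k f"
proof
  have pn: "\<phi>^n = \<phi>^i * \<phi>^(n-i)" using i by (simp flip: power_add)
  show "Iset \<phi> n i f Z \<subseteq> Tset \<phi> n i k f"
  proof
    fix v assume "v \<in> Iset \<phi> n i f Z"
    then obtain x0 z where v: "v = ((x0*\<phi>^i) mod \<phi>^n, (x0*f + z) mod \<phi>^n)" and zZ: "z \<in> Z"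
      unfolding Iset_def by blast
    define c where "c = x0 mod \<phi>^(n-i)"
    define q where "q = x0 div \<phi>^(n-i)"
    have x0: "x0 = c + \<phi>^(n-i) * q" unfolding c_def q_def by (simp add: algebra_simps)
    have v1: "(x0*\<phi>^i) mod \<phi>^n = \<phi>^i * c"
      unfolding c_def pn by (simp add: mult.commute mod_mult_mult1)
    have cP: "c \<in> Pd (degree \<phi> * (n - i))"
      using degree_mod_less[of "\<phi>^(n-i)" x0] nz by (auto simp: Pd_def degree_power_eq c_def mult.commute)
    define y where "y = (\<phi>^(n-i)*q*f + z) mod \<phi>^n"
    have "\<phi>^k dvd \<phi>^(n-i)*q*f + z"
      using kf Z1[OF zZ] by (metis dvd_add dvd_mult2 mult.assoc mult.commute)
    then have yS: "y \<in> Sk \<phi> n k" unfolding y_def using Sk_mod[OF nz k] by blast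
    have v2: "(x0*f + z) mod \<phi>^n = (c*f + y) mod \<phi>^n"
      unfolding y_def by (simp add: mod_add_right_eq x0 algebra_simps)
    show "v \<in> Tset \<phi> n i k f" unfolding Tset_def v v1 v2 using cP yS by force
  qed
  show "Tset \<phi> n i k f \<subseteq> Iset \<phi> n i f Z"
  proof
    fix v assume "v \<in> Tset \<phi> n i k f"
    then obtain c y where v: "v = (\<phi>^i*c, (c*f+y) mod \<phi>^n)" and cP: "c \<in> Pd (degree \<phi>*(n-i))"
      and yS: "y \<in> Sk \<phi> n k" unfolding Tset_def by force
    obtain d z where zZ: "z \<in> Z" and dv: "\<phi>^n dvd (\<phi>^(n-i)*d*f + z - y)" using Z2[OF yS] by blast
    define x0 where "x0 = c + \<phi>^(n-i)*d"
    have "\<phi>^i*c \<in> Sk \<phi> n i" unfolding Sk_def using cP by blast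
    then have m: "(\<phi>^i*c) mod \<phi>^n = \<phi>^i*c" using Sk_D[OF nz i] by blast
    have "(x0*\<phi>^i) mod \<phi>^n = (\<phi>^i*c + \<phi>^n * d) mod \<phi>^n"
      unfolding x0_def pn by (simp add: algebra_simps)
    also have "\<dots> = \<phi>^i*c" using m by simp
    finally have v1: "(x0*\<phi>^i) mod \<phi>^n = \<phi>^i*c" .
    have eq: "(x0*f + z) - (c*f+y) = \<phi>^(n-i)*d*f + z - y" unfolding x0_def by (simp add: algebra_simps)
    have "\<phi>^n dvd (x0*f + z) - (c*f+y)" unfolding eq by (rule dv)
    then have v2: "(x0*f + z) mod \<phi>^n = (c*f+y) mod \<phi>^n" by (simp only: mod_eq_dvd_iff)
    show "v \<in> Iset \<phi> n i f Z" unfolding Iset_def v using v1 v2 zZ by (metis (mono_tags, lifting) mem_Collect_eq)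
  qed
qed


lemma pow_dvd_cancel:
  fixes \<phi> h :: "'a::field poly"
  assumes pr: "prime_elem \<phi>" and nd: "\<not> \<phi> dvd h"
  shows "\<phi>^n dvd h * d \<Longrightarrow> \<phi>^n dvd d"
proof (induction n arbitrary: d)
  case 0 then show ?case by simp
next
  case (Suc n)
  have nz: "\<phi> \<noteq> 0" using pr by auto
  have "\<phi> dvd h * d" using Suc.prems by (metis dvd_mult_left power_Suc)
  then have "\<phi> dvd d" using pr nd prime_elem_dvd_mult_iff by blast
  then obtain d' where d': "d = \<phi> * d'" by (auto elim: dvdE)
  have "\<phi> * \<phi>^n dvd \<phi> * (h * d')" using Suc.prems d' by (simp add: ac_simps)
  then have "\<phi>^n dvd h * d'" using nz by simp
  then have "\<phi>^n dvd d'" by (rule Suc.IH)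
  then show ?case using d' by simp
qed

lemma unit_inv:
  fixes \<phi> h :: "'a::{finite,field} poly"
  assumes irr: "irreducible \<phi>" and nd: "\<not> \<phi> dvd h"
  shows "\<exists>hinv. \<phi> ^ n dvd (h * hinv - 1)"
proof -
  have pr: "prime_elem \<phi>" using irr by (rule field_poly_irreducible_imp_prime)
  have nz: "\<phi> \<noteq> 0" using pr by auto
  let ?N = "\<phi>^n"
  have Nz: "?N \<noteq> 0" using nz by simp
  let ?R = "{c. c mod ?N = c}"
  have sub: "?R \<subseteq> Pd (degree ?N)"
  proof
    fix c assume "c \<in> ?R"
    then have "c = c mod ?N" by simp
    then show "c \<in> Pd (degree ?N)" using degree_mod_less[OF Nz, of c] unfolding Pd_def by auto
  qed
  have fin: "finite ?R" using finite_subset[OF sub finite_Pd] .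
  let ?M = "\<lambda>c. (h * c) mod ?N"
  have inj: "inj_on ?M ?R"
  proof (rule inj_onI)
    fix c c' assume c: "c \<in> ?R" "c' \<in> ?R" and e: "?M c = ?M c'"
    then have "?N dvd h * c - h * c'" by (simp add: mod_eq_dvd_iff)
    then have "?N dvd h * (c - c')" by (simp add: right_diff_distrib)
    then have "?N dvd c - c'" by (rule pow_dvd_cancel[OF pr nd])
    then have "c mod ?N = c' mod ?N" by (simp add: mod_eq_dvd_iff)
    then show "c = c'" using c by simp
  qed
  have img: "?M ` ?R \<subseteq> ?R" by auto
  have "?M ` ?R = ?R" using endo_inj_surj[OF fin img inj] .
  moreover have "1 mod ?N \<in> ?R" by simp
  ultimately obtain c where "(h * c) mod ?N = 1 mod ?N" by (metis (no_types, lifting) imageE)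
  then have "?N dvd h * c - 1" by (simp add: mod_eq_dvd_iff)
  then show ?thesis by blast
qed



lemma gen1: "gen_ideal N [(A,B)] = {((x0*A) mod N, (x0*B + x1*A) mod N) | x0 x1. True}"
proof -
  have "gen_ideal N [(A,B)] = {((fst (r (0::nat))*A) mod N, (fst (r (0::nat))*B + snd (r (0::nat))*A) mod N) | r. True}"
    unfolding gen_ideal_def by (simp add: rmul_def rred_def)
  also have "\<dots> = {((x0*A) mod N, (x0*B + x1*A) mod N) | x0 x1. True}"
  proof (intro set_eqI iffI)
    fix v assume "v \<in> {((fst (r (0::nat))*A) mod N, (fst (r (0::nat))*B + snd (r (0::nat))*A) mod N) | r. True}"
    then show "v \<in> {((x0*A) mod N, (x0*B + x1*A) mod N) | x0 x1. True}" by blast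
  next
    fix v assume "v \<in> {((x0*A) mod N, (x0*B + x1*A) mod N) | x0 x1. True}"
    then obtain x0 x1 where "v = ((x0*A) mod N, (x0*B + x1*A) mod N)" by blast
    then show "v \<in> {((fst (r (0::nat))*A) mod N, (fst (r (0::nat))*B + snd (r (0::nat))*A) mod N) | r. True}"
      by (intro CollectI exI[where x="\<lambda>_::nat. (x0,x1)"]) simp
  qed
  finally show ?thesis .
qed

lemma gen2: "gen_ideal N [(A,B),(C,D)] =
   {((x0*A + y0*C) mod N, (x0*B + x1*A + (y0*D + y1*C)) mod N) | x0 x1 y0 y1. True}"
proof -
  have "gen_ideal N [(A,B),(C,D)] = {((fst (r (0::nat))*A + fst (r (1::nat))*C) mod N,
       (fst (r (0::nat))*B + snd (r (0::nat))*A + (fst (r (1::nat))*D + snd (r (1::nat))*C)) mod N) | r. True}"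
    unfolding gen_ideal_def by (simp add: rmul_def rred_def numeral_2_eq_2 lessThan_Suc ac_simps)
  also have "\<dots> = {((x0*A + y0*C) mod N, (x0*B + x1*A + (y0*D + y1*C)) mod N) | x0 x1 y0 y1. True}"
  proof (intro set_eqI iffI)
    fix v assume "v \<in> {((fst (r (0::nat))*A + fst (r (1::nat))*C) mod N,
       (fst (r (0::nat))*B + snd (r (0::nat))*A + (fst (r (1::nat))*D + snd (r (1::nat))*C)) mod N) | r. True}"
    then show "v \<in> {((x0*A + y0*C) mod N, (x0*B + x1*A + (y0*D + y1*C)) mod N) | x0 x1 y0 y1. True}" by blast
  next
    fix v assume "v \<in> {((x0*A + y0*C) mod N, (x0*B + x1*A + (y0*D + y1*C)) mod N) | x0 x1 y0 y1. True}"
    then obtain x0 x1 y0 y1 where v: "v = ((x0*A + y0*C) mod N, (x0*B + x1*A + (y0*D + y1*C)) mod N)" by blast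
    define r :: "nat \<Rightarrow> _" where "r = (\<lambda>j. if j = 0 then (x0,x1) else (y0,y1))"
    have "v = ((fst (r (0::nat))*A + fst (r (1::nat))*C) mod N,
       (fst (r (0::nat))*B + snd (r (0::nat))*A + (fst (r (1::nat))*D + snd (r (1::nat))*C)) mod N)" unfolding v r_def by simp
    then show "v \<in> {((fst (r (0::nat))*A + fst (r (1::nat))*C) mod N,
       (fst (r (0::nat))*B + snd (r (0::nat))*A + (fst (r (1::nat))*D + snd (r (1::nat))*C)) mod N) | r. True}" by blast
  qed
  finally show ?thesis .
qed



lemma card_I:
  fixes \<phi> f :: "'a::{finite,field} poly"
  assumes nz: "\<phi> \<noteq> 0" and i: "i \<le> n" and k: "k \<le> n"
    and kf: "\<phi>^k dvd \<phi>^(n-i) * f"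
    and Z1: "\<And>z. z \<in> Z \<Longrightarrow> \<phi>^k dvd z"
    and Z2: "\<And>y. y \<in> Sk \<phi> n k \<Longrightarrow> \<exists>d z. z \<in> Z \<and> \<phi>^n dvd (\<phi>^(n-i)*d*f + z - y)"
  shows "card (Iset \<phi> n i f Z) = CARD('a) ^ (degree \<phi> * (n - i)) * CARD('a) ^ (degree \<phi> * (n - k))"
  using I_eq_T[OF assms] card_T[OF nz k] by simp

lemma caseB:
  fixes \<phi> :: "'a::{finite,field} poly"
  assumes nz: "\<phi> \<noteq> 0"
  shows "card (gen_ideal (\<phi>^n) [(1,0)]) = CARD('a) ^ (degree \<phi> * n) * CARD('a) ^ (degree \<phi> * n)"
proof -
  have "gen_ideal (\<phi>^n) [(1,0)] = Iset \<phi> n 0 0 {x*\<phi>^0 | x. True}"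
    unfolding gen1 Iset_def by auto
  moreover have "card (Iset \<phi> n 0 0 {x*\<phi>^0 | x. True}) = CARD('a) ^ (degree \<phi> * (n - 0)) * CARD('a) ^ (degree \<phi> * (n - 0))"
  proof (rule card_I[OF nz])
    fix y assume "y \<in> Sk \<phi> n 0"
    show "\<exists>d z. z \<in> {x*\<phi>^0 | x. True} \<and> \<phi>^n dvd (\<phi>^(n-0)*d*0 + z - y)"
      by (rule exI[of _ 0], rule exI[of _ y]) simp
  qed auto
  ultimately show ?thesis by simp
qed

lemma caseC:
  fixes \<phi> :: "'a::{finite,field} poly"
  assumes nz: "\<phi> \<noteq> 0" and i: "i \<le> n"
  shows "card (gen_ideal (\<phi>^n) [(0,\<phi>^i)]) = CARD('a) ^ (degree \<phi> * (n - i))"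
proof -
  have "gen_ideal (\<phi>^n) [(0,\<phi>^i)] = Iset \<phi> n n 0 {x*\<phi>^i | x. True}"
    unfolding gen1 Iset_def by auto
  moreover have "card (Iset \<phi> n n 0 {x*\<phi>^i | x. True}) = CARD('a) ^ (degree \<phi> * (n - n)) * CARD('a) ^ (degree \<phi> * (n - i))"
  proof (rule card_I[OF nz _ i])
    fix y assume "y \<in> Sk \<phi> n i"
    then obtain c where "y = \<phi>^i * c" unfolding Sk_def by auto
    then show "\<exists>d z. z \<in> {x*\<phi>^i | x. True} \<and> \<phi>^n dvd (\<phi>^(n-n)*d*0 + z - y)"
      by (intro exI[of _ 0] exI[of _ "c*\<phi>^i"]) auto
  qed auto
  ultimately show ?thesis by simp
qed

lemma caseD1:
  fixes \<phi> f :: "'a::{finite,field} poly"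
  assumes nz: "\<phi> \<noteq> 0" and i: "i \<le> n" and kf: "\<phi>^i dvd \<phi>^(n-i) * f"
  shows "card (gen_ideal (\<phi>^n) [(\<phi>^i, f)]) = CARD('a) ^ (degree \<phi> * (n - i)) * CARD('a) ^ (degree \<phi> * (n - i))"
proof -
  have "gen_ideal (\<phi>^n) [(\<phi>^i, f)] = Iset \<phi> n i f {x*\<phi>^i | x. True}"
    unfolding gen1 Iset_def by auto
  moreover have "card (Iset \<phi> n i f {x*\<phi>^i | x. True}) = CARD('a) ^ (degree \<phi> * (n - i)) * CARD('a) ^ (degree \<phi> * (n - i))"
  proof (rule card_I[OF nz i i kf])
    fix y assume "y \<in> Sk \<phi> n i"
    then obtain c where "y = \<phi>^i * c" unfolding Sk_def by auto
    then show "\<exists>d z. z \<in> {x*\<phi>^i | x. True} \<and> \<phi>^n dvd (\<phi>^(n-i)*d*f + z - y)"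
      by (intro exI[of _ 0] exI[of _ "c*\<phi>^i"]) auto
  qed auto
  ultimately show ?thesis by simp
qed

lemma caseD2:
  fixes \<phi> h :: "'a::{finite,field} poly"
  assumes nz: "\<phi> \<noteq> 0" and i: "i \<le> n" and ti: "t \<le> i" and big: "n + t < 2 * i"
    and hinv: "\<phi>^n dvd h * hinv - 1"
  shows "card (gen_ideal (\<phi>^n) [(\<phi>^i, \<phi>^t * h)]) = CARD('a) ^ (degree \<phi> * (n - i)) * CARD('a) ^ (degree \<phi> * (n - (n - i + t)))"
proof -
  let ?k = "n - i + t"
  have pk: "\<phi>^(n-i) * \<phi>^t = \<phi>^?k" using i by (simp flip: power_add)
  have "gen_ideal (\<phi>^n) [(\<phi>^i, \<phi>^t * h)] = Iset \<phi> n i (\<phi>^t * h) {x*\<phi>^i | x. True}"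
    unfolding gen1 Iset_def by auto
  moreover have "card (Iset \<phi> n i (\<phi>^t * h) {x*\<phi>^i | x. True}) = CARD('a) ^ (degree \<phi> * (n - i)) * CARD('a) ^ (degree \<phi> * (n - ?k))"
  proof (rule card_I[OF nz i])
    show "?k \<le> n" using ti i by simp
    show "\<phi>^?k dvd \<phi>^(n-i) * (\<phi>^t * h)" using pk by (metis dvd_triv_left mult.assoc)
    have ki: "?k \<le> i" using big i by simp
    fix z assume "z \<in> {x*\<phi>^i | x. True}"
    then obtain x where "z = x * \<phi>^i" by auto
    then show "\<phi>^?k dvd z" using dvd_mult[OF le_imp_power_dvd[OF ki, of \<phi>], of x] by simp
  next
    fix y assume "y \<in> Sk \<phi> n ?k"
    then obtain c where y: "y = \<phi>^?k * c" unfolding Sk_def by auto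
    have "\<phi>^(n-i)*(c*hinv)*(\<phi>^t*h) + 0 - y = (\<phi>^(n-i) * \<phi>^t) * c * (h * hinv - 1)"
      unfolding y pk[symmetric] by (simp add: algebra_simps)
    also have "\<dots> = (h * hinv - 1) * (\<phi>^?k * c)" using pk by (simp add: ac_simps)
    finally have "\<phi>^n dvd \<phi>^(n-i)*(c*hinv)*(\<phi>^t*h) + 0 - y" using hinv by (simp add: dvd_mult2)
    moreover have "(0::'a poly) \<in> {x*\<phi>^i | x. True}" by auto
    ultimately show "\<exists>d z. z \<in> {x*\<phi>^i | x. True} \<and> \<phi>^n dvd (\<phi>^(n-i)*d*(\<phi>^t*h) + z - y)"
      by blast
  qed
  ultimately show ?thesis by simp
qed

lemma caseE:
  fixes \<phi> f :: "'a::{finite,field} poly"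
  assumes nz: "\<phi> \<noteq> 0" and i: "i \<le> n" and wi: "w \<le> i" and kf: "\<phi>^w dvd \<phi>^(n-i) * f"
  shows "card (gen_ideal (\<phi>^n) [(\<phi>^i, f), (0, \<phi>^w)]) = CARD('a) ^ (degree \<phi> * (n - i)) * CARD('a) ^ (degree \<phi> * (n - w))"
proof -
  have "gen_ideal (\<phi>^n) [(\<phi>^i, f), (0, \<phi>^w)] = Iset \<phi> n i f {x1*\<phi>^i + y0*\<phi>^w | x1 y0. True}"
    unfolding gen2 Iset_def by (auto simp: add.assoc)
  moreover have "card (Iset \<phi> n i f {x1*\<phi>^i + y0*\<phi>^w | x1 y0. True}) = CARD('a) ^ (degree \<phi> * (n - i)) * CARD('a) ^ (degree \<phi> * (n - w))"
  proof (rule card_I[OF nz i _ kf])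
    show "w \<le> n" using wi i by simp
    fix z assume "z \<in> {x1*\<phi>^i + y0*\<phi>^w | x1 y0. True}"
    then obtain x1 y0 where "z = x1*\<phi>^i + y0*\<phi>^w" by auto
    then show "\<phi>^w dvd z" using dvd_add[OF dvd_mult[OF le_imp_power_dvd[OF wi, of \<phi>], of x1] dvd_triv_right[of "\<phi>^w" y0]] by simp
  next
    fix y assume "y \<in> Sk \<phi> n w"
    then obtain c where yc: "y = \<phi>^w * c" unfolding Sk_def by auto
    show "\<exists>d z. z \<in> {x1*\<phi>^i + y0*\<phi>^w | x1 y0. True} \<and> \<phi>^n dvd (\<phi>^(n-i)*d*f + z - y)"
    proof (rule exI[of _ 0], rule exI[of _ "0*\<phi>^i + c*\<phi>^w"], rule conjI)
      show "0*\<phi>^i + c*\<phi>^w \<in> {x1*\<phi>^i + y0*\<phi>^w | x1 y0. True}" by blast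
    qed (simp add: yc mult.commute)
  qed
  ultimately show ?thesis by simp
qed

lemma U_le_i:
  "(LEAST U. rred N (0, \<phi> ^ U) \<in> gen_ideal N [(\<phi> ^ i, f)]) \<le> i"
proof (rule Least_le)
  show "rred N (0, \<phi> ^ i) \<in> gen_ideal N [(\<phi> ^ i, f)]"
    unfolding gen1 rred_def by (rule CollectI, rule exI[of _ 0], rule exI[of _ 1]) simp
qed

lemma U_le_unit:
  fixes \<phi> h :: "'a::field poly"
  assumes i: "i \<le> n" and hinv: "\<phi>^n dvd h * hinv - 1"
  shows "(LEAST U. rred (\<phi>^n) (0, \<phi> ^ U) \<in> gen_ideal (\<phi>^n) [(\<phi> ^ i, \<phi>^t * h)]) \<le> n - i + t"
proof (rule Least_le)
  have pk: "\<phi>^(n-i) * \<phi>^t = \<phi>^(n-i+t)" by (simp flip: power_add)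
  have pn: "\<phi>^(n-i) * \<phi>^i = \<phi>^n" using i by (simp flip: power_add)
  let ?x0 = "\<phi>^(n-i) * hinv"
  have a: "(?x0 * \<phi>^i) mod \<phi>^n = 0 mod \<phi>^n"
    using pn by (simp add: ac_simps)
  have "?x0 * (\<phi>^t * h) + 0 * \<phi>^i - \<phi>^(n-i+t) = (h * hinv - 1) * \<phi>^(n-i+t)"
    unfolding pk[symmetric] by (simp add: algebra_simps)
  then have "\<phi>^n dvd ?x0 * (\<phi>^t * h) + 0 * \<phi>^i - \<phi>^(n-i+t)" using hinv by (simp add: dvd_mult2)
  then have b: "(?x0 * (\<phi>^t * h) + 0 * \<phi>^i) mod \<phi>^n = \<phi>^(n-i+t) mod \<phi>^n"
    by (simp only: mod_eq_dvd_iff)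
  show "rred (\<phi>^n) (0, \<phi> ^ (n-i+t)) \<in> gen_ideal (\<phi>^n) [(\<phi> ^ i, \<phi>^t * h)]"
    unfolding gen1 rred_def by (rule CollectI, rule exI[of _ ?x0], rule exI[of _ 0]) (use a b in simp)
qed



theorem theorem3p14:
  fixes p m s :: nat and \<alpha> \<alpha>0 \<gamma> \<epsilon> :: "'a::{finite,field}"
  assumes "prime p" and "odd p" and "m > 0" and "s > 0"
    and "CARD('a) = p ^ m" and "p ^ m mod 4 = 3"
    and "\<alpha> \<noteq> 0" and "\<not> (\<exists>y. y ^ 2 = \<alpha>)"
    and "\<alpha>0 ^ (p ^ s) = \<alpha>" and "\<gamma> ^ 4 + 4 * \<alpha>0 = 0"
    and "\<epsilon> = 1 \<or> \<epsilon> = -1"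
  defines "\<phi> \<equiv> [:\<gamma> ^ 2 / 2, \<epsilon> * \<gamma>, 1:]"
    and "N \<equiv> [:\<gamma> ^ 2 / 2, \<epsilon> * \<gamma>, 1:] ^ (p ^ s)"
  shows
   "card (gen_ideal N [(0, 0)]) = 1 \<and>
    card (gen_ideal N [(1, 0)]) = p ^ (4 * m * p ^ s) \<and>
    (\<forall>i. i \<le> p ^ s - 1 \<longrightarrow>
        card (gen_ideal N [(0, \<phi> ^ i)]) = p ^ (2 * m * (p ^ s - i))) \<and>
    (\<forall>i t h a b. 1 \<le> i \<and> i \<le> p ^ s - 1 \<and> t < i \<and>
        (h = 0 \<or> (h = (\<Sum>j<i - t. [:b j, a j:] * \<phi> ^ j) \<and> (a 0 \<noteq> 0 \<or> b 0 \<noteq> 0))) \<longrightarrow>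
        (h = 0 \<longrightarrow> card (gen_ideal N [(\<phi> ^ i, \<phi> ^ t * h)]) = p ^ (4 * m * (p ^ s - i))) \<and>
        (h \<noteq> 0 \<and> 2 * i \<le> p ^ s + t \<longrightarrow>
            card (gen_ideal N [(\<phi> ^ i, \<phi> ^ t * h)]) = p ^ (4 * m * (p ^ s - i))) \<and>
        (h \<noteq> 0 \<and> p ^ s + t < 2 * i \<longrightarrow>
            card (gen_ideal N [(\<phi> ^ i, \<phi> ^ t * h)]) = p ^ (2 * m * (p ^ s - t)))) \<and>
    (\<forall>i t w h a b. 1 \<le> i \<and> i \<le> p ^ s - 1 \<and> t < w \<and>
        (h = 0 \<or> (h = (\<Sum>j<w - t. [:b j, a j:] * \<phi> ^ j) \<and> (a 0 \<noteq> 0 \<or> b 0 \<noteq> 0))) \<and>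
        w < (LEAST U. rred N (0, \<phi> ^ U) \<in> gen_ideal N [(\<phi> ^ i, \<phi> ^ t * h)]) \<longrightarrow>
        card (gen_ideal N [(\<phi> ^ i, \<phi> ^ t * h), (0, \<phi> ^ w)]) = p ^ (2 * m * (2 * p ^ s - i - w)))"
proof -
  let ?n = "p ^ s"
  have t2: "(2::'a) \<noteq> 0" using two_ne0 assms(8) by blast
  have nr: "\<And>x. poly \<phi> x \<noteq> 0" unfolding \<phi>_def
    using phi_noroot[OF assms(7) assms(8) assms(9) assms(10) assms(11)] by blast
  have d\<phi>: "degree \<phi> = 2" unfolding \<phi>_def by simp
  have nz: "\<phi> \<noteq> 0" using d\<phi> by auto
  have irr: "irreducible \<phi>" using irred_deg2[OF d\<phi> nr] .
  have NN: "N = \<phi> ^ ?n" unfolding N_def \<phi>_def ..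
  have Q: "CARD('a) = p ^ m" using assms(5) .
  have pw: "\<And>a b. CARD('a) ^ (2 * a) * CARD('a) ^ (2 * b) = p ^ (2 * m * (a + b))"
    by (simp add: Q power_mult[symmetric] power_add[symmetric] algebra_simps)
  have partA: "card (gen_ideal N [(0, 0)]) = 1"
  proof -
    have "gen_ideal N [(0, 0)] = {(0, 0)}" unfolding gen1 by auto
    then show ?thesis by simp
  qed
  have partB: "card (gen_ideal N [(1, 0)]) = p ^ (4 * m * p ^ s)"
    using caseB[OF nz, of ?n] pw[of ?n ?n] unfolding NN d\<phi> by (simp add: algebra_simps)
  have partC: "\<forall>i. i \<le> p ^ s - 1 \<longrightarrow>
        card (gen_ideal N [(0, \<phi> ^ i)]) = p ^ (2 * m * (p ^ s - i))"
  proof (intro allI impI)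
    fix i assume "i \<le> p ^ s - 1"
    then have i: "i \<le> ?n" by simp
    show "card (gen_ideal N [(0, \<phi> ^ i)]) = p ^ (2 * m * (p ^ s - i))"
      using caseC[OF nz i] unfolding NN d\<phi> by (simp add: Q power_mult[symmetric] algebra_simps)
  qed
  have partD: "\<forall>i t h a b. 1 \<le> i \<and> i \<le> p ^ s - 1 \<and> t < i \<and>
        (h = 0 \<or> (h = (\<Sum>j<i - t. [:b j, a j:] * \<phi> ^ j) \<and> (a 0 \<noteq> 0 \<or> b 0 \<noteq> 0))) \<longrightarrow>
        (h = 0 \<longrightarrow> card (gen_ideal N [(\<phi> ^ i, \<phi> ^ t * h)]) = p ^ (4 * m * (p ^ s - i))) \<and>
        (h \<noteq> 0 \<and> 2 * i \<le> p ^ s + t \<longrightarrow>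
            card (gen_ideal N [(\<phi> ^ i, \<phi> ^ t * h)]) = p ^ (4 * m * (p ^ s - i))) \<and>
        (h \<noteq> 0 \<and> p ^ s + t < 2 * i \<longrightarrow>
            card (gen_ideal N [(\<phi> ^ i, \<phi> ^ t * h)]) = p ^ (2 * m * (p ^ s - t)))"
  proof (intro allI impI)
    fix i t h a b
    assume H: "1 \<le> i \<and> i \<le> p ^ s - 1 \<and> t < i \<and>
        (h = 0 \<or> (h = (\<Sum>j<i - t. [:b j, a j:] * \<phi> ^ j) \<and> (a 0 \<noteq> 0 \<or> b 0 \<noteq> 0)))"
    then have i: "i \<le> ?n" and ti: "t < i" by auto
    have c4: "card (gen_ideal N [(\<phi> ^ i, \<phi> ^ t * h)]) = p ^ (4 * m * (p ^ s - i))"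
      if kf: "\<phi>^i dvd \<phi>^(?n-i) * (\<phi> ^ t * h)"
    proof -
      have e4: "2 * m * ((?n-i) + (?n-i)) = 4 * m * (?n-i)" by simp
      show ?thesis using caseD1[OF nz i kf] pw[of "?n - i" "?n - i"] unfolding NN d\<phi> e4 by simp
    qed
    show "(h = 0 \<longrightarrow> card (gen_ideal N [(\<phi> ^ i, \<phi> ^ t * h)]) = p ^ (4 * m * (p ^ s - i))) \<and>
        (h \<noteq> 0 \<and> 2 * i \<le> p ^ s + t \<longrightarrow>
            card (gen_ideal N [(\<phi> ^ i, \<phi> ^ t * h)]) = p ^ (4 * m * (p ^ s - i))) \<and>
        (h \<noteq> 0 \<and> p ^ s + t < 2 * i \<longrightarrow>
            card (gen_ideal N [(\<phi> ^ i, \<phi> ^ t * h)]) = p ^ (2 * m * (p ^ s - t)))"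
    proof (intro conjI impI)
      assume "h = 0" then show "card (gen_ideal N [(\<phi> ^ i, \<phi> ^ t * h)]) = p ^ (4 * m * (p ^ s - i))"
        by (intro c4) simp
    next
      assume "h \<noteq> 0 \<and> 2 * i \<le> p ^ s + t"
      then have le: "i \<le> ?n - i + t" using i by linarith
      have eq: "\<phi>^(?n-i) * (\<phi> ^ t * h) = \<phi>^(?n - i + t) * h" by (simp add: power_add mult.assoc)
      show "card (gen_ideal N [(\<phi> ^ i, \<phi> ^ t * h)]) = p ^ (4 * m * (p ^ s - i))"
        by (rule c4, unfold eq, rule dvd_mult2, rule le_imp_power_dvd[OF le])
    next
      assume hb: "h \<noteq> 0 \<and> p ^ s + t < 2 * i"
      then have hs: "h = (\<Sum>j<i - t. [:b j, a j:] * \<phi> ^ j)" and ab: "a 0 \<noteq> 0 \<or> b 0 \<noteq> 0" using H by auto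
      have "\<not> \<phi> dvd h" unfolding hs by (rule h_nd[of \<phi> a b, OF d\<phi> ab]) (use ti in simp)
      then obtain hinv where hinv: "\<phi>^?n dvd h * hinv - 1" using unit_inv[OF irr] by blast
      have e: "(?n - i) + (?n - (?n - i + t)) = ?n - t" using i ti by simp
      show "card (gen_ideal N [(\<phi> ^ i, \<phi> ^ t * h)]) = p ^ (2 * m * (p ^ s - t))"
        using caseD2[OF nz i _ _ hinv, of t] ti hb pw[of "?n - i" "?n - (?n - i + t)"] e
        unfolding NN d\<phi> by simp
    qed
  qed
  have partE: "\<forall>i t w h a b. 1 \<le> i \<and> i \<le> p ^ s - 1 \<and> t < w \<and>
        (h = 0 \<or> (h = (\<Sum>j<w - t. [:b j, a j:] * \<phi> ^ j) \<and> (a 0 \<noteq> 0 \<or> b 0 \<noteq> 0))) \<and>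
        w < (LEAST U. rred N (0, \<phi> ^ U) \<in> gen_ideal N [(\<phi> ^ i, \<phi> ^ t * h)]) \<longrightarrow>
        card (gen_ideal N [(\<phi> ^ i, \<phi> ^ t * h), (0, \<phi> ^ w)]) = p ^ (2 * m * (2 * p ^ s - i - w))"
  proof (intro allI impI)
    fix i t w h a b
    assume H: "1 \<le> i \<and> i \<le> p ^ s - 1 \<and> t < w \<and>
        (h = 0 \<or> (h = (\<Sum>j<w - t. [:b j, a j:] * \<phi> ^ j) \<and> (a 0 \<noteq> 0 \<or> b 0 \<noteq> 0))) \<and>
        w < (LEAST U. rred N (0, \<phi> ^ U) \<in> gen_ideal N [(\<phi> ^ i, \<phi> ^ t * h)])"
    then have i: "i \<le> ?n" and tw: "t < w" and wU: "w < (LEAST U. rred N (0, \<phi> ^ U) \<in> gen_ideal N [(\<phi> ^ i, \<phi> ^ t * h)])" by auto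
    have wi: "w \<le> i" using wU U_le_i[of N \<phi> i "\<phi> ^ t * h"] by simp
    have kf: "\<phi>^w dvd \<phi>^(?n-i) * (\<phi> ^ t * h)"
    proof (cases "h = 0")
      case False
      then have hs: "h = (\<Sum>j<w - t. [:b j, a j:] * \<phi> ^ j)" and ab: "a 0 \<noteq> 0 \<or> b 0 \<noteq> 0" using H by auto
      have "\<not> \<phi> dvd h" unfolding hs by (rule h_nd[of \<phi> a b, OF d\<phi> ab]) (use tw in simp)
      then obtain hinv where hinv: "\<phi>^?n dvd h * hinv - 1" using unit_inv[OF irr] by blast
      have "w \<le> ?n - i + t" using wU U_le_unit[OF i hinv, of t] unfolding NN by simp
      moreover have "\<phi>^(?n-i) * (\<phi> ^ t * h) = \<phi>^(?n - i + t) * h" by (simp add: power_add mult.assoc)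
      ultimately show ?thesis by (metis dvd_mult2 le_imp_power_dvd)
    qed simp
    have e: "(?n - i) + (?n - w) = 2 * ?n - i - w" using i wi by simp
    show "card (gen_ideal N [(\<phi> ^ i, \<phi> ^ t * h), (0, \<phi> ^ w)]) = p ^ (2 * m * (2 * p ^ s - i - w))"
      using caseE[OF nz i wi kf] pw[of "?n - i" "?n - w"] e unfolding NN d\<phi> by simp
  qed
  show ?thesis using partA partB partC partD partE by blast
qed


end
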